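(* Let $T\in V$ be a target variable. If $0<\zeta_T<n$ and $\Upsilon$ is conservative, then $\bigcup_{i=1}^{n}MB_i(T)=MB(T)$.
   Context: Let $G=(V,E)$ be a DAG (causal Bayesian network) over a finite set $V$ of random variables with joint distribution $P$ satisfying the Markov condition with respect to $G$; causal sufficiency is assumed. For $X\in V$, $pa(X)$ and $ch(X)$ are the parents and children of $X$ in $G$, $sp(X)=\big(\bigcup_{Y\in ch(X)}pa(Y)\big)\setminus\{X\}$ is the set of spouses, and $MB(X)=pa(X)\cup ch(X)\cup sp(X)$ is the Markov blanket. There are $n\ge 1$ intervention experiments; in the $i$-th, the set $\Upsilon_i\subseteq V$ (possibly empty) is manipulated, and $\Upsilon=\{\Upsilon_1,\dots,\Upsilon_n\}$. The post-intervention DAG is $G_i=(V,E_i)$ with $E_i=\{(a,b)\in E: b\notin\Upsilon_i\}$, with distribution $P_i(V)=\prod_{V_j\notin\Upsilon_i}P(V_j\mid pa(V_j))\prod_{V_j\in\Upsilon_i}P_i(V_j)$, and $D_i$ is a dataset drawn from $P_i$. It is assumed that each $P_i$ is faithful to $G_i$ and that conditional independence tests on $D_i$ are reliable (return exactly the conditional independences of $P_i$). $MB_i(T)$ denotes the Markov blanket of $T$ found in $D_i$, i.e. the set of parents, children and spouses of $T$ in $G_i$. $\zeta_T=|\{i:T\in\Upsilon_i\}|$. $\Upsilon$ is called conservative if for every $V_j\in\bigcup_{i=1}^n\Upsilon_i$ there exists $i$ with $V_j\notin\Upsilon_i$. *)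

theory Defs
  imports Main
begin

definition dag :: "'a set \<Rightarrow> ('a \<times> 'a) set \<Rightarrow> bool" where
  "dag V E \<longleftrightarrow> finite V \<and> E \<subseteq> V \<times> V \<and> acyclic E"

definition pa :: "('a \<times> 'a) set \<Rightarrow> 'a \<Rightarrow> 'a set" where
  "pa E X = {a. (a, X) \<in> E}"

definition ch :: "('a \<times> 'a) set \<Rightarrow> 'a \<Rightarrow> 'a set" where
  "ch E X = {b. (X, b) \<in> E}"

definition sp :: "('a \<times> 'a) set \<Rightarrow> 'a \<Rightarrow> 'a set" where
  "sp E X = (\<Union>Y\<in>ch E X. pa E Y) - {X}"

definition MB :: "('a \<times> 'a) set \<Rightarrow> 'a \<Rightarrow> 'a set" where
  "MB E X = pa E X \<union> ch E X \<union> sp E X"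

text \<open>Edge set of the post-intervention DAG when the set U is manipulated.\<close>
definition post_int :: "('a \<times> 'a) set \<Rightarrow> 'a set \<Rightarrow> ('a \<times> 'a) set" where
  "post_int E U = {(a, b) \<in> E. b \<notin> U}"

definition MB_i :: "('a \<times> 'a) set \<Rightarrow> (nat \<Rightarrow> 'a set) \<Rightarrow> nat \<Rightarrow> 'a \<Rightarrow> 'a set" where
  "MB_i E Ups i T = MB (post_int E (Ups i)) T"

definition zeta :: "(nat \<Rightarrow> 'a set) \<Rightarrow> nat \<Rightarrow> 'a \<Rightarrow> nat" where
  "zeta Ups n T = card {i \<in> {1..n}. T \<in> Ups i}"

definition conservative :: "(nat \<Rightarrow> 'a set) \<Rightarrow> nat \<Rightarrow> bool" where
  "conservative Ups n \<longleftrightarrow>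
     (\<forall>v \<in> (\<Union>i\<in>{1..n}. Ups i). \<exists>i\<in>{1..n}. v \<notin> Ups i)"

end

theory Submission
  imports Defs
begin

theorem theorem5:
  fixes V :: "'a set" and E :: "('a \<times> 'a) set" and Ups :: "nat \<Rightarrow> 'a set"
    and n :: nat and T :: 'a
  assumes "dag V E"
    and "n \<ge> 1"
    and "\<forall>i\<in>{1..n}. Ups i \<subseteq> V"
    and "T \<in> V"
    and "0 < zeta Ups n T" and "zeta Ups n T < n"
    and "conservative Ups n"
  shows "(\<Union>i\<in>{1..n}. MB_i E Ups i T) = MB E T"
proof
  have key: "\<exists>i\<in>{1..n}. v \<notin> Ups i" for v
  proof (cases "v \<in> (\<Union>i\<in>{1..n}. Ups i)")
    case True then show ?thesis using assms(7) unfolding conservative_def by blast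
  next
    case False then show ?thesis using assms(2) by auto
  qed
  show "(\<Union>i\<in>{1..n}. MB_i E Ups i T) \<subseteq> MB E T"
    unfolding MB_i_def MB_def pa_def ch_def sp_def post_int_def by blast
  show "MB E T \<subseteq> (\<Union>i\<in>{1..n}. MB_i E Ups i T)"
  proof
    fix x assume x: "x \<in> MB E T"
    show "x \<in> (\<Union>i\<in>{1..n}. MB_i E Ups i T)"
    proof (cases "(x, T) \<in> E")
      case True
      obtain i where "i \<in> {1..n}" "T \<notin> Ups i" using key by blast
      then show ?thesis using True unfolding MB_i_def MB_def pa_def post_int_def by blast
    next
      case nT: False
      show ?thesis
      proof (cases "(T, x) \<in> E")
        case True
        obtain i where "i \<in> {1..n}" "x \<notin> Ups i" using key by blast
        then show ?thesis using True unfolding MB_i_def MB_def ch_def post_int_def by blast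
      next
        case False
        then obtain Y where Y: "(T, Y) \<in> E" "(x, Y) \<in> E" "x \<noteq> T"
          using x nT unfolding MB_def pa_def ch_def sp_def by blast
        obtain i where "i \<in> {1..n}" "Y \<notin> Ups i" using key by blast
        then show ?thesis using Y unfolding MB_i_def MB_def sp_def pa_def ch_def post_int_def by blast
      qed
    qed
  qed
qed

end
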